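(* Let $\mathbb P^{(1)}$ and $\mathbb P^{(2)}$ be laws of IID sequences $\{\omega_n\}_{n\ge1}$ of bounded, symmetric (hence centered) random variables with $\mathbb E[\omega_1^2]=1$. Then there is a constant $c>0$ such that for every $h\ge0$, $0\le\lambda\le1$, $N\in2\mathbb N$, $m\in\{0,2,\dots,N\}$ and $a\in\{\mathtt f,\mathtt c\}$, $$\big|\mathbb E^{(1)}\textsc{f}^a_{N,\omega}(\lambda,h;m)-\mathbb E^{(2)}\textsc{f}^a_{N,\omega}(\lambda,h;m)\big|\le c\,\frac{m\lambda^3}{N}$$ and $$\big|\mathbb E^{(1)}\textsc{f}^a_{N,\omega}(\lambda,h)-\mathbb E^{(2)}\textsc{f}^a_{N,\omega}(\lambda,h)\big|\le c\,\lambda^3.$$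
   Context: $S=\{S_n\}_{n\ge0}$ is the simple symmetric random walk on $\mathbb Z$ started at $0$, law $\mathbf P$, expectation $\mathbf E$. Set $\mathrm{sign}(S_{2n}):=\mathrm{sign}(S_{2n-1})$ whenever $S_{2n}=0$, $\Delta_n=(1-\mathrm{sign}(S_n))/2$, $\mathcal N=\sum_{n=1}^N\Delta_n$. Let $\Omega^{\mathtt f}_N$ be the set of all paths and $\Omega^{\mathtt c}_N=\{S_N=0\}$. For a set of paths $\tilde\Omega$, $Z_{N,\omega}(\tilde\Omega)=\mathbf E\big[\exp\big(-2\lambda\sum_{n=1}^N(\omega_n+h)\Delta_n\big);\tilde\Omega\big]$. Define $\textsc{f}^a_{N,\omega}(\lambda,h)=\frac1N\log Z_{N,\omega}(\Omega^a_N)$ and $\textsc{f}^a_{N,\omega}(\lambda,h;m)=\frac1N\log Z_{N,\omega}(\Omega^a_N\cap\{\mathcal N=m\})$. $\mathbb E^{(\ell)}$ denotes expectation with respect to $\mathbb P^{(\ell)}$. *)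

theory Defs
  imports "HOL-Probability.Probability"
begin

text \<open>Paths of the simple random walk of length N are encoded by their increments
  x 0, ..., x (N-1) in {-1,1}; the walk is S_n = x 0 + ... + x (n-1). The uniform
  measure on these 2^N increment vectors is the law P of (S_0,...,S_N).\<close>

definition walk_paths :: "nat \<Rightarrow> (nat \<Rightarrow> int) set" where
  "walk_paths N = ({..<N} \<rightarrow>\<^sub>E {-1, 1})"

definition walk :: "(nat \<Rightarrow> int) \<Rightarrow> nat \<Rightarrow> int" where
  "walk x n = (\<Sum>k<n. x k)"

definition walk_sign :: "(nat \<Rightarrow> int) \<Rightarrow> nat \<Rightarrow> int" where
  "walk_sign x n = (if walk x n = 0 then sgn (walk x (n - 1)) else sgn (walk x n))"

definition Delta :: "(nat \<Rightarrow> int) \<Rightarrow> nat \<Rightarrow> real" where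
  "Delta x n = (1 - real_of_int (walk_sign x n)) / 2"

definition calN :: "(nat \<Rightarrow> int) \<Rightarrow> nat \<Rightarrow> real" where
  "calN x N = (\<Sum>n=1..N. Delta x n)"

datatype bc = Free | Constrained

definition Omega :: "bc \<Rightarrow> nat \<Rightarrow> (nat \<Rightarrow> int) \<Rightarrow> bool" where
  "Omega a N x = (case a of Free \<Rightarrow> True | Constrained \<Rightarrow> walk x N = 0)"

definition Zpart :: "nat \<Rightarrow> real \<Rightarrow> real \<Rightarrow> (nat \<Rightarrow> real) \<Rightarrow> ((nat \<Rightarrow> int) \<Rightarrow> bool) \<Rightarrow> real" where
  "Zpart N lam h \<omega> A = (\<Sum>x\<in>{x\<in>walk_paths N. A x}.
       exp (-2 * lam * (\<Sum>n=1..N. (\<omega> n + h) * Delta x n))) / 2 ^ N"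

definition free_energy :: "bc \<Rightarrow> nat \<Rightarrow> (nat \<Rightarrow> real) \<Rightarrow> real \<Rightarrow> real \<Rightarrow> real" where
  "free_energy a N \<omega> lam h = ln (Zpart N lam h \<omega> (Omega a N)) / real N"

definition free_energy_m :: "bc \<Rightarrow> nat \<Rightarrow> (nat \<Rightarrow> real) \<Rightarrow> real \<Rightarrow> real \<Rightarrow> nat \<Rightarrow> real" where
  "free_energy_m a N \<omega> lam h m =
     ln (Zpart N lam h \<omega> (\<lambda>x. Omega a N x \<and> calN x N = real m)) / real N"

definition iid_law :: "real measure \<Rightarrow> (nat \<Rightarrow> real) measure" where
  "iid_law \<mu> = (\<Pi>\<^sub>M n\<in>UNIV. \<mu>)"

definition good_law :: "real measure \<Rightarrow> bool" where
  "good_law \<mu> \<longleftrightarrow> prob_space \<mu> \<and> sets \<mu> = sets borel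
     \<and> (\<exists>C. AE x in \<mu>. \<bar>x\<bar> \<le> C)
     \<and> distr \<mu> borel uminus = \<mu>
     \<and> (\<integral>x. x\<^sup>2 \<partial>\<mu>) = 1"

end

theory Submission
  imports Defs
begin



definition PS :: "(nat \<Rightarrow> real) measure" where "PS = PiM UNIV (\<lambda>_. borel)"

definition bmf :: "((nat \<Rightarrow> real) \<Rightarrow> real) \<Rightarrow> bool" where
  "bmf F \<longleftrightarrow> F \<in> borel_measurable PS \<and> (\<exists>B. \<forall>w. \<bar>F w\<bar> \<le> B)"

definition Ij :: "real measure \<Rightarrow> nat \<Rightarrow> ((nat \<Rightarrow> real) \<Rightarrow> real) \<Rightarrow> (nat \<Rightarrow> real) \<Rightarrow> real" where
  "Ij M j F = (\<lambda>w. integral\<^sup>L M (\<lambda>s. F (w(j := s))))"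

lemma space_PS[simp]: "space PS = UNIV"
  by (simp add: PS_def space_PiM)

lemma sets_PS_pair_cong: "sets M = sets borel \<Longrightarrow> sets (PS \<Otimes>\<^sub>M M) = sets (PS \<Otimes>\<^sub>M borel)"
  by (intro sets_pair_measure_cong) auto

lemma upd_meas:
  assumes "sets M = sets borel"
  shows "(\<lambda>p. (fst p)(j := snd p)) \<in> measurable (PS \<Otimes>\<^sub>M M) PS"
proof -
  have "(\<lambda>p. (fst p)(j := snd p)) \<in> measurable (PS \<Otimes>\<^sub>M borel) PS"
    unfolding PS_def
  proof (rule measurable_PiM_single')
    fix i :: nat
    show "(\<lambda>p. ((fst p)(j := snd p)) i) \<in> measurable (PiM UNIV (\<lambda>_. borel) \<Otimes>\<^sub>M borel) borel"
    proof (cases "i = j")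
      case True then show ?thesis by simp
    next
      case False
      have "(\<lambda>p. (fst p :: nat \<Rightarrow> real) i) \<in> measurable (PiM UNIV (\<lambda>_. borel) \<Otimes>\<^sub>M borel) borel"
        by measurable
      with False show ?thesis by simp
    qed
  qed (simp add: space_PiM)
  then show ?thesis
    using measurable_cong_sets[OF sets_PS_pair_cong[OF assms] refl] by blast
qed

lemma upd_meas1:
  assumes "sets M = sets borel"
  shows "(\<lambda>s. w(j := s)) \<in> measurable M PS"
proof -
  have "(\<lambda>s. (\<lambda>p. (fst p)(j := snd p)) (w, s)) \<in> measurable M PS"
    by (rule measurable_compose[OF measurable_Pair1'[of w PS M] upd_meas[OF assms]]) simp
  then show ?thesis by simp
qed

lemma bmf_integrable:
  assumes "prob_space M" "sets M = sets borel" "bmf F"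
  shows "integrable M (\<lambda>s. F (w(j := s)))"
proof -
  interpret prob_space M by fact
  from assms(3) obtain B where B: "\<And>w. \<bar>F w\<bar> \<le> B" and Fm: "F \<in> borel_measurable PS"
    unfolding bmf_def by auto
  show ?thesis
    by (rule integrable_const_bound[where B=B]) (auto simp: B intro: measurable_compose[OF upd_meas1[OF assms(2)] Fm])
qed

lemma bmf_Ij:
  assumes "prob_space M" "sets M = sets borel" "bmf F"
  shows "bmf (Ij M j F)"
proof -
  interpret prob_space M by fact
  from assms(3) obtain B where B: "\<And>w. \<bar>F w\<bar> \<le> B" and Fm: "F \<in> borel_measurable PS"
    unfolding bmf_def by auto
  have m: "(\<lambda>p. F ((fst p)(j := snd p))) \<in> borel_measurable (PS \<Otimes>\<^sub>M M)"
    by (rule measurable_compose[OF upd_meas[OF assms(2)] Fm])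
  have "Ij M j F \<in> borel_measurable PS"
    unfolding Ij_def
    by (rule borel_measurable_lebesgue_integral) (use m in \<open>simp add: case_prod_beta\<close>)
  moreover have "\<bar>Ij M j F w\<bar> \<le> B" for w
  proof -
    have "\<bar>Ij M j F w\<bar> \<le> (\<integral>s. \<bar>F (w(j := s))\<bar> \<partial>M)"
      unfolding Ij_def using integral_norm_bound[of M "\<lambda>s. F (w(j := s))"] by simp
    also have "\<dots> \<le> (\<integral>s. B \<partial>M)"
      by (intro integral_mono) (auto simp: B intro!: integrable_abs bmf_integrable assms)
    also have "\<dots> = B" by (simp add: prob_space)
    finally show ?thesis .
  qed
  ultimately show ?thesis unfolding bmf_def by blast
qed

lemma bmf_lin: "bmf F \<Longrightarrow> bmf G \<Longrightarrow> bmf (\<lambda>w. a * F w + b * G w)"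
proof -
  assume F: "bmf F" and G: "bmf G"
  then obtain B1 B2 where B1: "\<And>w. \<bar>F w\<bar> \<le> B1" and B2: "\<And>w. \<bar>G w\<bar> \<le> B2"
    and m: "F \<in> borel_measurable PS" "G \<in> borel_measurable PS" unfolding bmf_def by auto
  have "\<bar>a * F w + b * G w\<bar> \<le> \<bar>a\<bar> * B1 + \<bar>b\<bar> * B2" for w
  proof -
    have "\<bar>a * F w + b * G w\<bar> \<le> \<bar>a\<bar> * \<bar>F w\<bar> + \<bar>b\<bar> * \<bar>G w\<bar>"
      by (metis abs_mult abs_triangle_ineq)
    also have "\<dots> \<le> \<bar>a\<bar> * B1 + \<bar>b\<bar> * B2"
      by (intro add_mono mult_left_mono B1 B2) auto
    finally show ?thesis .
  qed
  with m show ?thesis unfolding bmf_def by auto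
qed

lemma bmf_const: "bmf (\<lambda>_. c)"
  unfolding bmf_def by auto

lemma bmf_abs: "bmf F \<Longrightarrow> bmf (\<lambda>w. \<bar>F w\<bar>)"
  unfolding bmf_def by auto

lemma bmf_sum: "finite S \<Longrightarrow> (\<And>i. i \<in> S \<Longrightarrow> bmf (f i)) \<Longrightarrow> bmf (\<lambda>w. \<Sum>i\<in>S. f i w)"
proof (induction S rule: finite_induct)
  case empty then show ?case by (simp add: bmf_const)
next
  case (insert x S)
  have "bmf (\<lambda>w. 1 * f x w + 1 * (\<Sum>i\<in>S. f i w))"
    by (rule bmf_lin) (use insert in auto)
  then show ?case using insert by simp
qed

lemma Ij_lin:
  assumes "prob_space M" "sets M = sets borel" "bmf F" "bmf G"
  shows "Ij M j (\<lambda>w. a * F w + b * G w) = (\<lambda>w. a * Ij M j F w + b * Ij M j G w)"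
proof
  fix w
  have iF: "integrable M (\<lambda>s. F (w(j := s)))" and iG: "integrable M (\<lambda>s. G (w(j := s)))"
    using bmf_integrable assms by auto
  show "Ij M j (\<lambda>w. a * F w + b * G w) w = a * Ij M j F w + b * Ij M j G w"
    unfolding Ij_def using iF iG by simp
qed

lemma Ij_mono:
  assumes "prob_space M" "sets M = sets borel" "bmf F" "bmf G" "\<And>w. F w \<le> G w"
  shows "Ij M j F w \<le> Ij M j G w"
  unfolding Ij_def by (intro integral_mono bmf_integrable assms)

lemma Ij_const:
  assumes "prob_space M"
  shows "Ij M j (\<lambda>_. c) = (\<lambda>_. c)"
  using assms unfolding Ij_def by (simp add: prob_space.prob_space)

lemma Ij_indep:
  assumes "prob_space M" "\<And>w s. F (w(j := s)) = F w"
  shows "Ij M j F = F"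
  using assms unfolding Ij_def by (simp add: prob_space.prob_space)

lemma Ij_swap:
  assumes pM: "prob_space M" and sM: "sets M = sets borel"
    and pM': "prob_space M'" and sM': "sets M' = sets borel" and F: "bmf F" and ij: "i \<noteq> j"
  shows "Ij M j (Ij M' i F) = Ij M' i (Ij M j F)"
proof
  fix w
  interpret pair_sigma_finite M M'
    using pM pM' by (simp add: pair_sigma_finite_def prob_space_imp_sigma_finite)
  interpret P: prob_space "M \<Otimes>\<^sub>M M'"
    using pM pM' by (simp add: prob_space_pair)
  from F obtain B where B: "\<And>w. \<bar>F w\<bar> \<le> B" and Fm: "F \<in> borel_measurable PS"
    unfolding bmf_def by auto
  have m1: "(\<lambda>p. (w(j := fst p), snd p)) \<in> measurable (M \<Otimes>\<^sub>M M') (PS \<Otimes>\<^sub>M M')"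
    by (intro measurable_Pair measurable_compose[OF measurable_fst upd_meas1[OF sM]] measurable_snd)
  have m2: "(\<lambda>p. (w(j := fst p))(i := snd p)) \<in> measurable (M \<Otimes>\<^sub>M M') PS"
    using measurable_compose[OF m1 upd_meas[OF sM', of i]] by simp
  have int: "integrable (M \<Otimes>\<^sub>M M') (\<lambda>p. F ((w(j := fst p))(i := snd p)))"
    by (rule P.integrable_const_bound[where B=B]) (auto simp: B intro: measurable_compose[OF m2 Fm])
  have "(\<integral>u. (\<integral>s. F ((w(j := s))(i := u)) \<partial>M) \<partial>M') = (\<integral>s. (\<integral>u. F ((w(j := s))(i := u)) \<partial>M') \<partial>M)"
  proof (rule Fubini_integral)
    have "(\<lambda>(s, u). F ((w(j := s))(i := u))) = (\<lambda>p. F ((w(j := fst p))(i := snd p)))"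
      by auto
    then show "integrable (M \<Otimes>\<^sub>M M') (\<lambda>(s, u). F ((w(j := s))(i := u)))"
      using int by simp
  qed
  moreover have "\<And>s u. (w(j := s))(i := u) = (w(i := u))(j := s)"
    using ij by (simp add: fun_upd_twist)
  ultimately show "Ij M j (Ij M' i F) w = Ij M' i (Ij M j F) w"
    unfolding Ij_def by simp
qed

definition Mix :: "real measure \<Rightarrow> real measure \<Rightarrow> real \<Rightarrow> nat \<Rightarrow> ((nat \<Rightarrow> real) \<Rightarrow> real) \<Rightarrow> (nat \<Rightarrow> real) \<Rightarrow> real" where
  "Mix M1 M2 t j F = (\<lambda>w. t * Ij M1 j F w + (1 - t) * Ij M2 j F w)"

definition Dj :: "real measure \<Rightarrow> real measure \<Rightarrow> nat \<Rightarrow> ((nat \<Rightarrow> real) \<Rightarrow> real) \<Rightarrow> (nat \<Rightarrow> real) \<Rightarrow> real" where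
  "Dj M1 M2 j F = (\<lambda>w. Ij M1 j F w - Ij M2 j F w)"

fun Phi :: "real measure \<Rightarrow> real measure \<Rightarrow> nat list \<Rightarrow> real \<Rightarrow> ((nat \<Rightarrow> real) \<Rightarrow> real) \<Rightarrow> real" where
  "Phi M1 M2 [] t F = F (\<lambda>_. undefined)"
| "Phi M1 M2 (j # js) t F = Phi M1 M2 js t (Mix M1 M2 t j F)"

fun Itr :: "real measure \<Rightarrow> nat list \<Rightarrow> ((nat \<Rightarrow> real) \<Rightarrow> real) \<Rightarrow> real" where
  "Itr M [] F = F (\<lambda>_. undefined)"
| "Itr M (j # js) F = Itr M js (Ij M j F)"

lemma incl_meas:
  assumes "sets M = sets borel"
  shows "(\<lambda>x. x) \<in> measurable (PiM I (\<lambda>_. M)) PS"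
  unfolding PS_def
proof (rule measurable_PiM_single')
  fix i :: nat
  show "(\<lambda>x. x i) \<in> measurable (PiM I (\<lambda>_. M)) borel"
  proof (cases "i \<in> I")
    case True
    then have "(\<lambda>x. x i) \<in> measurable (PiM I (\<lambda>_. M)) M" by simp
    then show ?thesis using measurable_cong_sets[OF refl assms] by blast
  next
    case False
    have "(\<lambda>x. undefined) \<in> measurable (PiM I (\<lambda>_. M)) borel" by simp
    then show ?thesis
      by (rule measurable_cong[THEN iffD1, rotated]) (use False in \<open>auto simp: space_PiM PiE_def extensional_def\<close>)
  qed
qed (simp add: space_PiM)

lemma Itr_PiM:
  assumes pM: "prob_space M" and sM: "sets M = sets borel"
  shows "distinct js \<Longrightarrow> bmf F \<Longrightarrow> Itr M js F = integral\<^sup>L (PiM (set js) (\<lambda>_. M)) F"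
proof (induction js arbitrary: F)
  case Nil
  then show ?case by (simp add: PiM_empty lebesgue_integral_count_space_finite)
next
  case (Cons j js)
  interpret product_sigma_finite "\<lambda>_. M"
    using pM by (simp add: product_sigma_finite_def prob_space_imp_sigma_finite)
  interpret P: prob_space "PiM (insert j (set js)) (\<lambda>_. M)"
    using pM by (intro prob_space_PiM) auto
  from Cons.prems obtain B where B: "\<And>w. \<bar>F w\<bar> \<le> B" and Fm: "F \<in> borel_measurable PS"
    unfolding bmf_def by auto
  have int: "integrable (PiM (insert j (set js)) (\<lambda>_. M)) F"
    by (rule P.integrable_const_bound[where B=B]) (auto simp: B intro: measurable_compose[OF incl_meas[OF sM] Fm])
  have "Itr M (j # js) F = Itr M js (Ij M j F)" by simp
  also have "\<dots> = integral\<^sup>L (PiM (set js) (\<lambda>_. M)) (Ij M j F)"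
    using Cons by (simp add: bmf_Ij[OF pM sM])
  also have "\<dots> = integral\<^sup>L (PiM (insert j (set js)) (\<lambda>_. M)) F"
    unfolding Ij_def using Cons.prems by (subst product_integral_insert[OF _ _ int]) auto
  finally show ?case by simp
qed

locale TL = M1: prob_space \<mu>1 + M2: prob_space \<mu>2 for \<mu>1 \<mu>2 :: "real measure" +
  assumes sets1: "sets \<mu>1 = sets borel" and sets2: "sets \<mu>2 = sets borel"
begin

lemma bmf_Mix: "bmf F \<Longrightarrow> bmf (Mix \<mu>1 \<mu>2 t j F)"
  unfolding Mix_def
  by (intro bmf_lin bmf_Ij sets1 sets2 M1.prob_space_axioms M2.prob_space_axioms)

lemma bmf_Dj: "bmf F \<Longrightarrow> bmf (Dj \<mu>1 \<mu>2 j F)"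
proof -
  assume F: "bmf F"
  have "bmf (\<lambda>w. 1 * Ij \<mu>1 j F w + (-1) * Ij \<mu>2 j F w)"
    by (intro bmf_lin bmf_Ij sets1 sets2 M1.prob_space_axioms M2.prob_space_axioms F)
  then show ?thesis unfolding Dj_def by simp
qed

lemma Mix_lin:
  assumes "bmf F" "bmf G"
  shows "Mix \<mu>1 \<mu>2 t j (\<lambda>w. a * F w + b * G w) = (\<lambda>w. a * Mix \<mu>1 \<mu>2 t j F w + b * Mix \<mu>1 \<mu>2 t j G w)"
  unfolding Mix_def
  by (simp add: Ij_lin[OF M1.prob_space_axioms sets1 assms] Ij_lin[OF M2.prob_space_axioms sets2 assms] algebra_simps)

lemma Phi_lin:
  "bmf F \<Longrightarrow> bmf G \<Longrightarrow> Phi \<mu>1 \<mu>2 js t (\<lambda>w. a * F w + b * G w) = a * Phi \<mu>1 \<mu>2 js t F + b * Phi \<mu>1 \<mu>2 js t G"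
proof (induction js arbitrary: F G)
  case Nil then show ?case by simp
next
  case (Cons j js)
  then show ?case by (simp add: Mix_lin bmf_Mix)
qed

lemma Phi_const: "Phi \<mu>1 \<mu>2 js t (\<lambda>_. c) = c"
proof (induction js)
  case Nil then show ?case by simp
next
  case (Cons j js)
  have "Mix \<mu>1 \<mu>2 t j (\<lambda>_. c) = (\<lambda>_. c)"
    unfolding Mix_def by (simp add: Ij_const[OF M1.prob_space_axioms] Ij_const[OF M2.prob_space_axioms] algebra_simps)
  then show ?case using Cons by simp
qed

lemma Phi_mono:
  "0 \<le> t \<Longrightarrow> t \<le> 1 \<Longrightarrow> bmf F \<Longrightarrow> bmf G \<Longrightarrow> (\<And>w. F w \<le> G w) \<Longrightarrow> Phi \<mu>1 \<mu>2 js t F \<le> Phi \<mu>1 \<mu>2 js t G"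
proof (induction js arbitrary: F G)
  case Nil then show ?case by simp
next
  case (Cons j js)
  have "Mix \<mu>1 \<mu>2 t j F w \<le> Mix \<mu>1 \<mu>2 t j G w" for w
    unfolding Mix_def
    using Cons.prems
    by (intro add_mono mult_left_mono Ij_mono[OF M1.prob_space_axioms sets1] Ij_mono[OF M2.prob_space_axioms sets2]) auto
  then show ?case using Cons by (simp add: bmf_Mix)
qed

lemma Phi_sum:
  "finite S \<Longrightarrow> (\<And>i. i \<in> S \<Longrightarrow> bmf (f i)) \<Longrightarrow> Phi \<mu>1 \<mu>2 js t (\<lambda>w. \<Sum>i\<in>S. f i w) = (\<Sum>i\<in>S. Phi \<mu>1 \<mu>2 js t (f i))"
proof (induction S rule: finite_induct)
  case empty then show ?case by (simp add: Phi_const)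
next
  case (insert x S)
  have "Phi \<mu>1 \<mu>2 js t (\<lambda>w. 1 * f x w + 1 * (\<Sum>i\<in>S. f i w)) = 1 * Phi \<mu>1 \<mu>2 js t (f x) + 1 * Phi \<mu>1 \<mu>2 js t (\<lambda>w. \<Sum>i\<in>S. f i w)"
    by (rule Phi_lin) (use insert in \<open>auto intro: bmf_sum\<close>)
  then show ?case using insert by simp
qed

lemma Phi_abs:
  assumes "0 \<le> t" "t \<le> 1" "bmf F"
  shows "\<bar>Phi \<mu>1 \<mu>2 js t F\<bar> \<le> Phi \<mu>1 \<mu>2 js t (\<lambda>w. \<bar>F w\<bar>)"
proof -
  have "Phi \<mu>1 \<mu>2 js t F \<le> Phi \<mu>1 \<mu>2 js t (\<lambda>w. \<bar>F w\<bar>)"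
    by (intro Phi_mono assms bmf_abs) auto
  moreover have "Phi \<mu>1 \<mu>2 js t (\<lambda>w. (-1) * F w + 0 * F w) \<le> Phi \<mu>1 \<mu>2 js t (\<lambda>w. \<bar>F w\<bar>)"
    by (intro Phi_mono assms bmf_abs bmf_lin) auto
  moreover have "Phi \<mu>1 \<mu>2 js t (\<lambda>w. (-1) * F w + 0 * F w) = - Phi \<mu>1 \<mu>2 js t F"
    by (subst Phi_lin) (use assms in auto)
  ultimately show ?thesis by linarith
qed

lemma Ij_Dj:
  assumes pM: "prob_space M" and sM: "sets M = sets borel" and F: "bmf F" and ij: "i \<noteq> j"
  shows "Ij M j (Dj \<mu>1 \<mu>2 i F) = Dj \<mu>1 \<mu>2 i (Ij M j F)"
proof -
  have "Dj \<mu>1 \<mu>2 i F = (\<lambda>w. 1 * Ij \<mu>1 i F w + (-1) * Ij \<mu>2 i F w)"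
    unfolding Dj_def by simp
  then have "Ij M j (Dj \<mu>1 \<mu>2 i F) = (\<lambda>w. 1 * Ij M j (Ij \<mu>1 i F) w + (-1) * Ij M j (Ij \<mu>2 i F) w)"
    by (simp only: Ij_lin[OF pM sM bmf_Ij[OF M1.prob_space_axioms sets1 F] bmf_Ij[OF M2.prob_space_axioms sets2 F]])
  also have "\<dots> = Dj \<mu>1 \<mu>2 i (Ij M j F)"
    unfolding Dj_def
    by (simp add: Ij_swap[OF pM sM M1.prob_space_axioms sets1 F ij] Ij_swap[OF pM sM M2.prob_space_axioms sets2 F ij])
  finally show ?thesis .
qed

lemma Mix_Dj_same: "bmf F \<Longrightarrow> Mix \<mu>1 \<mu>2 t j (Dj \<mu>1 \<mu>2 j F) = Dj \<mu>1 \<mu>2 j F"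
proof -
  have ind: "Dj \<mu>1 \<mu>2 j F (w(j := s)) = Dj \<mu>1 \<mu>2 j F w" for w s
    unfolding Dj_def Ij_def by simp
  show ?thesis
    unfolding Mix_def
    by (simp add: Ij_indep[OF M1.prob_space_axioms ind] Ij_indep[OF M2.prob_space_axioms ind] algebra_simps)
qed

lemma Phi_deriv:
  "distinct js \<Longrightarrow> bmf F \<Longrightarrow>
    ((\<lambda>t. Phi \<mu>1 \<mu>2 js t F) has_real_derivative (\<Sum>i\<in>set js. Phi \<mu>1 \<mu>2 js t (Dj \<mu>1 \<mu>2 i F))) (at t)"
proof (induction js arbitrary: F t)
  case Nil then show ?case by simp
next
  case (Cons j js)
  define G1 where "G1 = Ij \<mu>1 j F"
  define G2 where "G2 = Ij \<mu>2 j F"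
  have G1: "bmf G1" unfolding G1_def by (intro bmf_Ij M1.prob_space_axioms sets1 Cons.prems)
  have G2: "bmf G2" unfolding G2_def by (intro bmf_Ij M2.prob_space_axioms sets2 Cons.prems)
  have dist: "distinct js" "j \<notin> set js" using Cons.prems by auto
  have eq: "(\<lambda>t. Phi \<mu>1 \<mu>2 (j # js) t F) = (\<lambda>t. t * Phi \<mu>1 \<mu>2 js t G1 + (1 - t) * Phi \<mu>1 \<mu>2 js t G2)"
    by (rule ext) (simp add: Mix_def G1_def G2_def[symmetric] Phi_lin[OF G1 G2, unfolded G1_def])
  define A1 where "A1 = (\<Sum>i\<in>set js. Phi \<mu>1 \<mu>2 js t (Dj \<mu>1 \<mu>2 i G1))"
  define A2 where "A2 = (\<Sum>i\<in>set js. Phi \<mu>1 \<mu>2 js t (Dj \<mu>1 \<mu>2 i G2))"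
  have d1: "((\<lambda>t. Phi \<mu>1 \<mu>2 js t G1) has_real_derivative A1) (at t)"
    unfolding A1_def by (rule Cons.IH[OF dist(1) G1])
  have d2: "((\<lambda>t. Phi \<mu>1 \<mu>2 js t G2) has_real_derivative A2) (at t)"
    unfolding A2_def by (rule Cons.IH[OF dist(1) G2])
  have d: "((\<lambda>t. t * Phi \<mu>1 \<mu>2 js t G1 + (1 - t) * Phi \<mu>1 \<mu>2 js t G2) has_real_derivative
      (Phi \<mu>1 \<mu>2 js t G1 + t * A1 - Phi \<mu>1 \<mu>2 js t G2 + (1 - t) * A2)) (at t)"
    by (auto intro!: derivative_eq_intros d1 d2)
  have s1: "Phi \<mu>1 \<mu>2 (j # js) t (Dj \<mu>1 \<mu>2 j F) = Phi \<mu>1 \<mu>2 js t G1 - Phi \<mu>1 \<mu>2 js t G2"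
  proof -
    have "Phi \<mu>1 \<mu>2 (j # js) t (Dj \<mu>1 \<mu>2 j F) = Phi \<mu>1 \<mu>2 js t (\<lambda>w. 1 * G1 w + (-1) * G2 w)"
      using Mix_Dj_same[OF Cons.prems(2)] by (simp add: Dj_def G1_def G2_def)
    moreover have "Phi \<mu>1 \<mu>2 js t (\<lambda>w. 1 * G1 w + (-1) * G2 w) = 1 * Phi \<mu>1 \<mu>2 js t G1 + (-1) * Phi \<mu>1 \<mu>2 js t G2"
      by (rule Phi_lin[OF G1 G2])
    ultimately show ?thesis by simp
  qed
  have s2: "Phi \<mu>1 \<mu>2 (j # js) t (Dj \<mu>1 \<mu>2 i F) = t * Phi \<mu>1 \<mu>2 js t (Dj \<mu>1 \<mu>2 i G1) + (1 - t) * Phi \<mu>1 \<mu>2 js t (Dj \<mu>1 \<mu>2 i G2)"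
    if "i \<in> set js" for i
  proof -
    have ij: "i \<noteq> j" using that dist by auto
    have "Mix \<mu>1 \<mu>2 t j (Dj \<mu>1 \<mu>2 i F) = (\<lambda>w. t * Dj \<mu>1 \<mu>2 i G1 w + (1 - t) * Dj \<mu>1 \<mu>2 i G2 w)"
      unfolding Mix_def G1_def G2_def
      by (simp add: Ij_Dj[OF M1.prob_space_axioms sets1 Cons.prems(2) ij] Ij_Dj[OF M2.prob_space_axioms sets2 Cons.prems(2) ij])
    then show ?thesis by (simp add: Phi_lin bmf_Dj G1 G2)
  qed
  have "(\<Sum>i\<in>set (j # js). Phi \<mu>1 \<mu>2 (j # js) t (Dj \<mu>1 \<mu>2 i F)) =
      Phi \<mu>1 \<mu>2 (j # js) t (Dj \<mu>1 \<mu>2 j F) + (\<Sum>i\<in>set js. Phi \<mu>1 \<mu>2 (j # js) t (Dj \<mu>1 \<mu>2 i F))"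
    using dist by simp
  also have "(\<Sum>i\<in>set js. Phi \<mu>1 \<mu>2 (j # js) t (Dj \<mu>1 \<mu>2 i F)) =
     (\<Sum>i\<in>set js. t * Phi \<mu>1 \<mu>2 js t (Dj \<mu>1 \<mu>2 i G1) + (1 - t) * Phi \<mu>1 \<mu>2 js t (Dj \<mu>1 \<mu>2 i G2))"
    by (rule sum.cong[OF refl s2])
  also have "Phi \<mu>1 \<mu>2 (j # js) t (Dj \<mu>1 \<mu>2 j F) + \<dots> = Phi \<mu>1 \<mu>2 js t G1 + t * A1 - Phi \<mu>1 \<mu>2 js t G2 + (1 - t) * A2"
    unfolding s1 A1_def A2_def by (simp only: sum.distrib sum_distrib_left[symmetric])
  finally show ?case using d eq by simp
qed

lemma Phi_compare:
  assumes js: "distinct js" and F: "bmf F" and W: "\<And>w. (\<Sum>i\<in>set js. \<bar>Dj \<mu>1 \<mu>2 i F w\<bar>) \<le> W"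
  shows "\<bar>Phi \<mu>1 \<mu>2 js 1 F - Phi \<mu>1 \<mu>2 js 0 F\<bar> \<le> W"
proof -
  obtain z :: real where z: "0 < z" "z < 1"
    and eq: "Phi \<mu>1 \<mu>2 js 1 F - Phi \<mu>1 \<mu>2 js 0 F = (1 - 0) * (\<Sum>i\<in>set js. Phi \<mu>1 \<mu>2 js z (Dj \<mu>1 \<mu>2 i F))"
    using MVT2[of 0 1 "\<lambda>t. Phi \<mu>1 \<mu>2 js t F" "\<lambda>t. \<Sum>i\<in>set js. Phi \<mu>1 \<mu>2 js t (Dj \<mu>1 \<mu>2 i F)"]
      Phi_deriv[OF js F] by auto
  have "\<bar>\<Sum>i\<in>set js. Phi \<mu>1 \<mu>2 js z (Dj \<mu>1 \<mu>2 i F)\<bar> \<le> (\<Sum>i\<in>set js. \<bar>Phi \<mu>1 \<mu>2 js z (Dj \<mu>1 \<mu>2 i F)\<bar>)"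
    by (rule sum_abs)
  also have "\<dots> \<le> (\<Sum>i\<in>set js. Phi \<mu>1 \<mu>2 js z (\<lambda>w. \<bar>Dj \<mu>1 \<mu>2 i F w\<bar>))"
    by (intro sum_mono Phi_abs bmf_Dj F) (use z in auto)
  also have "\<dots> = Phi \<mu>1 \<mu>2 js z (\<lambda>w. \<Sum>i\<in>set js. \<bar>Dj \<mu>1 \<mu>2 i F w\<bar>)"
    by (rule Phi_sum[symmetric]) (auto intro: bmf_abs bmf_Dj F)
  also have "\<dots> \<le> Phi \<mu>1 \<mu>2 js z (\<lambda>_. W)"
    by (intro Phi_mono bmf_sum bmf_abs bmf_Dj F bmf_const W) (use z in auto)
  also have "\<dots> = W" by (rule Phi_const)
  finally show ?thesis using eq by simp
qed

lemma Phi_1: "Phi \<mu>1 \<mu>2 js 1 F = Itr \<mu>1 js F"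
proof (induction js arbitrary: F)
  case Nil then show ?case by simp
next
  case (Cons j js)
  have "Mix \<mu>1 \<mu>2 1 j F = Ij \<mu>1 j F" unfolding Mix_def by simp
  then show ?case using Cons by simp
qed

lemma Phi_0: "Phi \<mu>1 \<mu>2 js 0 F = Itr \<mu>2 js F"
proof (induction js arbitrary: F)
  case Nil then show ?case by simp
next
  case (Cons j js)
  have "Mix \<mu>1 \<mu>2 0 j F = Ij \<mu>2 j F" unfolding Mix_def by simp
  then show ?case using Cons by simp
qed

end




lemma sig_ratio:
  fixes P Q a b :: real
  assumes P: "P > 0" and Q: "Q > 0"
  shows "Q * exp a / (P + Q * exp a) \<le> exp \<bar>a - b\<bar> * (Q * exp b / (P + Q * exp b))"
proof -
  have pa: "P + Q * exp a > 0" and pb: "P + Q * exp b > 0" using P Q by (auto intro: add_pos_pos)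
  have key: "Q * exp a * (P + Q * exp b) \<le> exp \<bar>a - b\<bar> * (Q * exp b) * (P + Q * exp a)"
  proof (cases "a \<ge> b")
    case True
    then have e: "exp \<bar>a - b\<bar> * exp b = exp a" by (simp add: exp_add[symmetric])
    have "exp b \<le> exp a" using True by simp
    then have "Q * exp a * (P + Q * exp b) \<le> Q * exp a * (P + Q * exp a)"
      using Q by (intro mult_left_mono) auto
    also have "\<dots> = exp \<bar>a - b\<bar> * (Q * exp b) * (P + Q * exp a)"
      using e by (simp add: algebra_simps)
    finally show ?thesis .
  next
    case False
    then have e: "exp \<bar>a - b\<bar> * exp b = exp (2 * b - a)" by (simp add: exp_add[symmetric])
    have e1: "exp a \<le> exp (2 * b - a)" and e2: "exp a * exp b \<le> exp (2 * b - a) * exp a"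
      using False by (auto simp: exp_add[symmetric])
    have "Q * exp a * (P + Q * exp b) = Q * (P * exp a) + Q * Q * (exp a * exp b)"
      by (simp add: algebra_simps)
    also have "\<dots> \<le> Q * (P * exp (2 * b - a)) + Q * Q * (exp (2 * b - a) * exp a)"
      using P Q e1 e2 by (intro add_mono mult_left_mono) auto
    also have "\<dots> = exp \<bar>a - b\<bar> * (Q * exp b) * (P + Q * exp a)"
      using e by (simp add: algebra_simps)
    finally show ?thesis .
  qed
  show ?thesis
    using key pa pb by (simp add: divide_simps mult.commute mult.left_commute)
qed

lemma taylor_site:
  fixes P Q y y0 r :: real
  assumes P: "P > 0" and Q: "Q > 0" and y: "\<bar>y\<bar> \<le> r" and y0: "\<bar>y0\<bar> \<le> r"
  shows "\<bar>ln (P + Q * exp y) - ln (P + Q) - Q / (P + Q) * y - P * Q / (P + Q)^2 / 2 * y^2\<bar>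
          \<le> \<bar>y\<bar>^3 / 6 * exp (2 * r) * (Q * exp y0 / (P + Q * exp y0))"
proof -
  define sg where "sg t = Q * exp t / (P + Q * exp t)" for t
  have pos: "P + Q * exp t > 0" for t using P Q by (auto intro: add_pos_pos)
  have sg01: "0 \<le> sg t" "sg t \<le> 1" for t
    using pos[of t] P Q by (auto simp: sg_def divide_simps)
  have d0: "DERIV (\<lambda>t. ln (P + Q * exp t)) t :> sg t" for t
    using pos[of t] by (auto intro!: derivative_eq_intros simp: sg_def)
  have d1: "DERIV sg t :> sg t * (1 - sg t)" for t
  proof -
    have "DERIV sg t :> (Q * exp t * (P + Q * exp t) - Q * exp t * (Q * exp t)) / (P + Q * exp t)^2"
      unfolding sg_def[abs_def] using pos[of t]
      by (auto intro!: derivative_eq_intros simp: power2_eq_square)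
    moreover have "(Q * exp t * (P + Q * exp t) - Q * exp t * (Q * exp t)) / (P + Q * exp t)^2 = sg t * (1 - sg t)"
      using pos[of t] by (simp add: sg_def field_simps power2_eq_square)
    ultimately show ?thesis by simp
  qed
  have d2: "DERIV (\<lambda>t. sg t * (1 - sg t)) t :> sg t * (1 - sg t) * (1 - 2 * sg t)" for t
  proof -
    have "DERIV (\<lambda>t. sg t * (1 - sg t)) t :> sg t * (1 - sg t) * (1 - sg t) + sg t * (- (sg t * (1 - sg t)))"
      by (auto intro!: derivative_eq_intros d1)
    then show ?thesis by (simp add: algebra_simps)
  qed
  define diff where "diff m = (if m = 0 then (\<lambda>t. ln (P + Q * exp t)) else if m = 1 then sg
      else if m = 2 then (\<lambda>t. sg t * (1 - sg t)) else (\<lambda>t. sg t * (1 - sg t) * (1 - 2 * sg t)))" for m :: nat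
  have D: "\<forall>m t. m < 3 \<and> \<bar>t\<bar> \<le> \<bar>y\<bar> \<longrightarrow> DERIV (diff m) t :> diff (Suc m) t"
  proof (intro allI impI)
    fix m :: nat and t :: real assume "m < 3 \<and> \<bar>t\<bar> \<le> \<bar>y\<bar>"
    then have "m = 0 \<or> m = 1 \<or> m = 2" by auto
    then show "DERIV (diff m) t :> diff (Suc m) t"
      using d0 d1 d2 by (auto simp: diff_def)
  qed
  obtain t where t: "\<bar>t\<bar> \<le> \<bar>y\<bar>"
    and eq: "ln (P + Q * exp y) = (\<Sum>m<3. diff m 0 / fact m * y ^ m) + diff 3 t / fact 3 * y ^ 3"
    using Maclaurin_bi_le[of diff "\<lambda>t. ln (P + Q * exp t)" 3 y, OF _ D] by (auto simp: diff_def)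
  have s3: "(\<Sum>m<3. diff m 0 / fact m * y ^ m) = ln (P + Q) + Q / (P + Q) * y + P * Q / (P + Q)^2 / 2 * y^2"
  proof -
    have "(\<Sum>m<3. diff m 0 / fact m * y ^ m) = diff 0 0 + diff 1 0 * y + diff 2 0 / 2 * y^2"
      by (simp add: numeral_3_eq_3 numeral_2_eq_2 lessThan_Suc fact_numeral power2_eq_square)
    moreover have "diff 2 0 = P * Q / (P + Q)^2"
      using pos[of 0] by (simp add: diff_def sg_def field_simps power2_eq_square)
    moreover have "diff 0 0 = ln (P + Q)" "diff 1 0 = Q / (P + Q)"
      by (simp_all add: diff_def sg_def)
    ultimately show ?thesis by (simp only:)
  qed
  have "\<bar>diff 3 t\<bar> \<le> sg t"
  proof -
    have "\<bar>diff 3 t\<bar> = sg t * ((1 - sg t) * \<bar>1 - 2 * sg t\<bar>)"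
      using sg01[of t] by (simp add: diff_def abs_mult)
    also have "\<dots> \<le> sg t * 1"
      using sg01[of t] by (intro mult_left_mono) (auto simp: abs_if mult_le_one)
    finally show ?thesis by simp
  qed
  also have "sg t \<le> exp \<bar>t - y0\<bar> * sg y0"
    unfolding sg_def by (rule sig_ratio[OF P Q])
  also have "\<dots> \<le> exp (2 * r) * sg y0"
    using t y y0 sg01[of y0] by (intro mult_right_mono) auto
  finally have b3: "\<bar>diff 3 t\<bar> \<le> exp (2 * r) * sg y0" .
  have "\<bar>ln (P + Q * exp y) - ln (P + Q) - Q / (P + Q) * y - P * Q / (P + Q)^2 / 2 * y^2\<bar> = \<bar>diff 3 t\<bar> / 6 * \<bar>y\<bar>^3"
    using eq s3 by (simp add: fact_numeral abs_mult power_abs)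
  also have "\<dots> \<le> exp (2 * r) * sg y0 / 6 * \<bar>y\<bar>^3"
    using b3 by (intro mult_right_mono divide_right_mono) auto
  finally show ?thesis by (simp add: sg_def mult_ac)
qed




definition clip :: "real \<Rightarrow> real \<Rightarrow> real" where "clip C s = max (- C) (min C s)"

lemma clip_bound: "0 \<le> C \<Longrightarrow> \<bar>clip C s\<bar> \<le> C"
  by (auto simp: clip_def)

lemma clip_id: "\<bar>s\<bar> \<le> C \<Longrightarrow> clip C s = s"
  by (auto simp: clip_def)

lemma clip_meas[measurable]: "clip C \<in> borel_measurable borel"
  unfolding clip_def by measurable

lemma quad_int1:
  fixes L :: "real \<Rightarrow> real"
  assumes pM: "prob_space M" and sM: "sets M = sets borel" and C: "0 \<le> C"
    and AEb: "AE s in M. \<bar>s\<bar> \<le> C" and m1: "(\<integral>s. s \<partial>M) = 0" and m2: "(\<integral>s. s\<^sup>2 \<partial>M) = 1"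
    and Lm: "L \<in> borel_measurable borel"
    and app: "\<And>s. \<bar>s\<bar> \<le> C \<Longrightarrow> \<bar>L s - \<alpha> - \<beta> * s - \<gamma> * s\<^sup>2\<bar> \<le> E"
  shows "\<bar>(\<integral>s. L (clip C s) \<partial>M) - (\<alpha> + \<gamma>)\<bar> \<le> E"
proof -
  interpret prob_space M by fact
  define R where "R s = L s - \<alpha> - \<beta> * s - \<gamma> * s\<^sup>2" for s
  have meas_cong: "f \<in> borel_measurable borel \<Longrightarrow> f \<in> borel_measurable M" for f :: "real \<Rightarrow> real"
    using measurable_cong_sets[OF sM refl] by blast
  have Rm: "(\<lambda>s. R (clip C s)) \<in> borel_measurable M"
    by (rule meas_cong) (unfold R_def, use Lm in measurable)
  have cm: "(\<lambda>s. clip C s) \<in> borel_measurable M"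
    by (rule meas_cong) measurable
  have c2m: "(\<lambda>s. (clip C s)\<^sup>2) \<in> borel_measurable M"
    by (rule meas_cong) measurable
  have iR: "integrable M (\<lambda>s. R (clip C s))"
    by (rule integrable_const_bound[where B=E]) (use Rm app clip_bound[OF C] in \<open>auto simp: R_def\<close>)
  have ic: "integrable M (\<lambda>s. clip C s)"
    by (rule integrable_const_bound[where B=C]) (use cm clip_bound[OF C] in auto)
  have ic2: "integrable M (\<lambda>s. (clip C s)\<^sup>2)"
  proof (rule integrable_const_bound[where B="C^2"])
    have "(clip C s)\<^sup>2 \<le> C\<^sup>2" for s
      using power_mono[OF clip_bound[OF C, of s], of 2] by simp
    then show "AE s in M. norm ((clip C s)\<^sup>2) \<le> C\<^sup>2" by simp
  qed (rule c2m)
  have e1: "(\<integral>s. clip C s \<partial>M) = 0"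
  proof -
    have "(\<integral>s. clip C s \<partial>M) = (\<integral>s. s \<partial>M)"
    proof (rule integral_cong_AE[OF cm])
      show "(\<lambda>s. s) \<in> borel_measurable M" by (rule meas_cong) simp
      show "AE s in M. clip C s = s" using AEb by eventually_elim (rule clip_id)
    qed
    then show ?thesis using m1 by simp
  qed
  have e2: "(\<integral>s. (clip C s)\<^sup>2 \<partial>M) = 1"
  proof -
    have "(\<integral>s. (clip C s)\<^sup>2 \<partial>M) = (\<integral>s. s\<^sup>2 \<partial>M)"
    proof (rule integral_cong_AE[OF c2m])
      show "(\<lambda>s. s\<^sup>2) \<in> borel_measurable M" by (rule meas_cong) simp
      show "AE s in M. (clip C s)\<^sup>2 = s\<^sup>2" using AEb by eventually_elim (simp add: clip_id)
    qed
    then show ?thesis using m2 by simp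
  qed
  have "(\<integral>s. L (clip C s) \<partial>M) = (\<integral>s. \<alpha> + \<beta> * clip C s + \<gamma> * (clip C s)\<^sup>2 + R (clip C s) \<partial>M)"
    by (simp add: R_def)
  also have "\<dots> = \<alpha> + \<beta> * (\<integral>s. clip C s \<partial>M) + \<gamma> * (\<integral>s. (clip C s)\<^sup>2 \<partial>M) + (\<integral>s. R (clip C s) \<partial>M)"
    using iR ic ic2 by (simp add: prob_space)
  finally have eq: "(\<integral>s. L (clip C s) \<partial>M) = \<alpha> + \<gamma> + (\<integral>s. R (clip C s) \<partial>M)"
    using e1 e2 by simp
  have "\<bar>\<integral>s. R (clip C s) \<partial>M\<bar> \<le> (\<integral>s. \<bar>R (clip C s)\<bar> \<partial>M)"
    using integral_norm_bound[of M "\<lambda>s. R (clip C s)"] by simp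
  also have "\<dots> \<le> (\<integral>s. E \<partial>M)"
    by (intro integral_mono integrable_abs iR) (use app clip_bound[OF C] in \<open>auto simp: R_def\<close>)
  also have "\<dots> = E" by (simp add: prob_space)
  finally show ?thesis using eq by simp
qed

lemma site_quad:
  fixes P Q lam C u :: real
  assumes P: "P \<ge> 0" and Q: "Q \<ge> 0" and l0: "0 \<le> lam" and l1: "lam \<le> 1" and C: "0 \<le> C" and u: "\<bar>u\<bar> \<le> C"
  shows "\<exists>\<alpha> \<beta> \<gamma>. \<forall>s. \<bar>s\<bar> \<le> C \<longrightarrow>
     \<bar>ln (P + Q * exp (-2 * lam * (s - u))) - \<alpha> - \<beta> * s - \<gamma> * s\<^sup>2\<bar> \<le> 4 / 3 * C^3 * exp (4 * C) * lam^3 * (Q / (P + Q))"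
proof -
  have K: "0 \<le> 4 / 3 * C^3 * exp (4 * C) * lam^3 * (Q / (P + Q))"
    using P Q C l0 by auto
  show ?thesis
  proof (cases "Q = 0")
    case True
    then show ?thesis using K by (intro exI[of _ "ln P"] exI[of _ 0]) auto
  next
    case False
    then have Qp: "Q > 0" using Q by auto
    show ?thesis
    proof (cases "P = 0")
      case True
      have "ln (P + Q * exp (-2 * lam * (s - u))) = (ln Q + 2 * lam * u) + (-2 * lam) * s" for s
        using True Qp by (simp add: ln_mult algebra_simps)
      then show ?thesis using K by (intro exI[of _ "ln Q + 2 * lam * u"] exI[of _ "-2 * lam"] exI[of _ 0]) auto
    next
      case False
      then have Pp: "P > 0" using P by auto
      define Q' where "Q' = Q * exp (2 * lam * u)"
      have Q'p: "Q' > 0" using Qp by (simp add: Q'_def)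
      define \<alpha> where "\<alpha> = ln (P + Q')"
      define \<beta> where "\<beta> = Q' / (P + Q') * (-2 * lam)"
      define \<gamma> where "\<gamma> = P * Q' / (P + Q')^2 / 2 * (4 * lam^2)"
      have main: "\<bar>ln (P + Q * exp (-2 * lam * (s - u))) - \<alpha> - \<beta> * s - \<gamma> * s\<^sup>2\<bar> \<le> 4 / 3 * C^3 * exp (4 * C) * lam^3 * (Q / (P + Q))"
        if s: "\<bar>s\<bar> \<le> C" for s
      proof -
        have e: "P + Q * exp (-2 * lam * (s - u)) = P + Q' * exp (-2 * lam * s)"
          by (simp add: Q'_def mult.assoc exp_add[symmetric] algebra_simps)
        have ys: "\<bar>-2 * lam * s\<bar> \<le> 2 * lam * C" using s l0 by (simp add: abs_mult mult_left_mono)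
        have yu: "\<bar>-2 * lam * u\<bar> \<le> 2 * lam * C" using u l0 by (simp add: abs_mult mult_left_mono)
        note T = taylor_site[OF Pp Q'p ys yu]
        have p: "Q' * exp (-2 * lam * u) / (P + Q' * exp (-2 * lam * u)) = Q / (P + Q)"
          by (simp add: Q'_def mult.assoc exp_add[symmetric])
        have lhs: "ln (P + Q' * exp (-2 * lam * s)) - ln (P + Q') - Q' / (P + Q') * (-2 * lam * s) - P * Q' / (P + Q')^2 / 2 * (-2 * lam * s)^2
            = ln (P + Q * exp (-2 * lam * (s - u))) - \<alpha> - \<beta> * s - \<gamma> * s\<^sup>2"
        proof -
          have b: "Q' / (P + Q') * (-2 * lam * s) = \<beta> * s" unfolding \<beta>_def by (simp only: mult_ac)
          have sq: "(-2 * lam * s)^2 = 4 * lam^2 * s^2" by (simp add: power_mult_distrib)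
          have g: "P * Q' / (P + Q')^2 / 2 * (-2 * lam * s)^2 = \<gamma> * s\<^sup>2" unfolding \<gamma>_def sq by (simp only: mult_ac)
          show ?thesis unfolding e b g \<alpha>_def ..
        qed
        have A: "\<bar>ln (P + Q * exp (-2 * lam * (s - u))) - \<alpha> - \<beta> * s - \<gamma> * s\<^sup>2\<bar> \<le> \<bar>-2 * lam * s\<bar>^3 / 6 * exp (2 * (2 * lam * C)) * (Q / (P + Q))"
          using T unfolding p lhs .
        have "\<bar>-2 * lam * s\<bar>^3 \<le> (2 * lam * C)^3"
          by (rule power_mono[OF ys]) simp
        moreover have "exp (2 * (2 * lam * C)) \<le> exp (4 * C)"
          using mult_right_mono[OF l1 C] by simp
        ultimately have "\<bar>-2 * lam * s\<bar>^3 / 6 * exp (2 * (2 * lam * C)) * (Q / (P + Q))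
            \<le> (2 * lam * C)^3 / 6 * exp (4 * C) * (Q / (P + Q))"
          using Pp Qp C l0 by (intro mult_right_mono mult_mono divide_right_mono) auto
        also have "\<dots> = 4 / 3 * C^3 * exp (4 * C) * lam^3 * (Q / (P + Q))"
          by (simp add: power_mult_distrib)
        finally have B: "\<bar>-2 * lam * s\<bar>^3 / 6 * exp (2 * (2 * lam * C)) * (Q / (P + Q)) \<le> 4 / 3 * C^3 * exp (4 * C) * lam^3 * (Q / (P + Q))" .
        from A B show ?thesis by (rule order_trans)
      qed
      show ?thesis
        by (rule exI[of _ \<alpha>], rule exI[of _ \<beta>], rule exI[of _ \<gamma>]) (use main in blast)
    qed
  qed
qed




definition En :: "nat \<Rightarrow> real \<Rightarrow> (nat \<Rightarrow> real) \<Rightarrow> (nat \<Rightarrow> int) \<Rightarrow> real" where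
  "En N h w x = (\<Sum>n=1..N. (w n + h) * Delta x n)"

lemma Zpart_En: "Zpart N lam h w A = (\<Sum>x\<in>{x\<in>walk_paths N. A x}. exp (-2 * lam * En N h w x)) / 2 ^ N"
  unfolding Zpart_def En_def by simp

lemma finite_paths: "finite {x\<in>walk_paths N. A x}"
  by (rule finite_subset[of _ "walk_paths N"]) (auto simp: walk_paths_def intro!: finite_PiE)

lemma Delta01:
  assumes x: "x \<in> walk_paths N" and i: "1 \<le> i" "i \<le> N"
  shows "Delta x i = 0 \<or> Delta x i = 1"
proof -
  obtain k where k: "i = Suc k" using i by (cases i) auto
  have kN: "k < N" using k i by auto
  have xk: "x k = -1 \<or> x k = 1" using x kN unfolding walk_paths_def by (auto simp: PiE_iff)
  have wi: "walk x i = walk x k + x k" unfolding walk_def k by simp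
  have "walk_sign x i = -1 \<or> walk_sign x i = 1"
  proof (cases "walk x i = 0")
    case True
    then have "walk x k \<noteq> 0" using wi xk by auto
    then show ?thesis using True unfolding walk_sign_def k by (auto simp: sgn_if)
  next
    case False
    then show ?thesis unfolding walk_sign_def by (auto simp: sgn_if)
  qed
  then show ?thesis unfolding Delta_def by auto
qed

lemma Delta_bounds: "0 \<le> Delta x n" "Delta x n \<le> 1"
  unfolding Delta_def walk_sign_def by (auto simp: sgn_if)

lemma En_upd:
  assumes i: "i \<in> {1..N}"
  shows "En N h (w(i := v)) x = En N h w x + (v - w i) * Delta x i"
proof -
  have "En N h (w(i := v)) x = ((w(i := v)) i + h) * Delta x i + (\<Sum>n\<in>{1..N} - {i}. ((w(i := v)) n + h) * Delta x n)"
    unfolding En_def by (rule sum.remove[OF _ i]) simp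
  also have "(\<Sum>n\<in>{1..N} - {i}. ((w(i := v)) n + h) * Delta x n) = (\<Sum>n\<in>{1..N} - {i}. (w n + h) * Delta x n)"
    by (rule sum.cong) auto
  finally have 1: "En N h (w(i := v)) x = (v + h) * Delta x i + (\<Sum>n\<in>{1..N} - {i}. (w n + h) * Delta x n)" by (simp only: fun_upd_same)
  have 2: "En N h w x = (w i + h) * Delta x i + (\<Sum>n\<in>{1..N} - {i}. (w n + h) * Delta x n)"
    unfolding En_def by (rule sum.remove[OF _ i]) simp
  from 1 2 show ?thesis by (simp add: algebra_simps)
qed

lemma Z_site:
  fixes A :: "(nat \<Rightarrow> int) \<Rightarrow> bool" and N :: nat
  assumes i: "i \<in> {1..N}"
  defines "S \<equiv> {x\<in>walk_paths N. A x}"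
  shows "Zpart N lam h (w(i := v)) A =
     (\<Sum>x\<in>S. exp (-2 * lam * En N h w x) * (1 - Delta x i)) / 2 ^ N
     + (\<Sum>x\<in>S. exp (-2 * lam * En N h w x) * Delta x i) / 2 ^ N * exp (-2 * lam * (v - w i))"
proof -
  have tm: "exp (-2 * lam * En N h (w(i := v)) x) =
      exp (-2 * lam * En N h w x) * (1 - Delta x i) + exp (-2 * lam * En N h w x) * Delta x i * exp (-2 * lam * (v - w i))"
    if "x \<in> S" for x
  proof -
    have x: "x \<in> walk_paths N" using that by (simp add: S_def)
    have "exp (-2 * lam * En N h (w(i := v)) x) = exp (-2 * lam * En N h w x) * exp (-2 * lam * (v - w i) * Delta x i)"
      unfolding En_upd[OF i] by (simp add: exp_add[symmetric] algebra_simps)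
    moreover have "Delta x i = 0 \<or> Delta x i = 1" using Delta01[OF x] i by auto
    ultimately show ?thesis by auto
  qed
  have "Zpart N lam h (w(i := v)) A = (\<Sum>x\<in>S. exp (-2 * lam * En N h w x) * (1 - Delta x i) + exp (-2 * lam * En N h w x) * Delta x i * exp (-2 * lam * (v - w i))) / 2 ^ N"
    unfolding Zpart_En S_def[symmetric] using tm by simp
  also have "\<dots> = (\<Sum>x\<in>S. exp (-2 * lam * En N h w x) * (1 - Delta x i)) / 2 ^ N
     + (\<Sum>x\<in>S. exp (-2 * lam * En N h w x) * Delta x i) / 2 ^ N * exp (-2 * lam * (v - w i))"
    by (simp add: sum.distrib sum_distrib_right add_divide_distrib)
  finally show ?thesis .
qed




definition cv :: "real \<Rightarrow> (nat \<Rightarrow> real) \<Rightarrow> nat \<Rightarrow> real" where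
  "cv C w = (\<lambda>n. clip C (w n))"

definition FF :: "nat \<Rightarrow> real \<Rightarrow> real \<Rightarrow> ((nat \<Rightarrow> int) \<Rightarrow> bool) \<Rightarrow> (nat \<Rightarrow> real) \<Rightarrow> real" where
  "FF N lam h A w = ln (Zpart N lam h w A) / real N"

lemma FF_meas: "FF N lam h A \<in> borel_measurable PS"
  unfolding FF_def Zpart_def PS_def by measurable

lemma FFcv_meas: "(\<lambda>w. FF N lam h A (cv C w)) \<in> borel_measurable PS"
proof -
  have "cv C \<in> measurable PS PS"
    unfolding cv_def PS_def by (rule measurable_PiM_single') (auto simp: space_PiM)
  then show ?thesis using FF_meas by (rule measurable_compose)
qed

lemma ln_bound: fixes a z b :: real shows "0 < a \<Longrightarrow> a \<le> z \<Longrightarrow> z \<le> b \<Longrightarrow> \<bar>ln z\<bar> \<le> \<bar>ln a\<bar> + \<bar>ln b\<bar>"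
proof -
  assume a: "0 < a" "a \<le> z" "z \<le> b"
  then have "ln a \<le> ln z" "ln z \<le> ln b" by auto
  then show ?thesis by linarith
qed

lemma En_bound:
  fixes u :: "nat \<Rightarrow> real" and x :: "nat \<Rightarrow> int"
  assumes "\<And>n. \<bar>u n\<bar> \<le> C" "0 \<le> h"
  shows "\<bar>En N h u x\<bar> \<le> real N * (C + h)"
proof -
  have "\<bar>En N h u x\<bar> \<le> (\<Sum>n=1..N. \<bar>(u n + h) * Delta x n\<bar>)"
    unfolding En_def by (rule sum_abs)
  also have "\<dots> \<le> (\<Sum>n=1..N. C + h)"
  proof (rule sum_mono)
    fix n
    have "\<bar>(u n + h) * Delta x n\<bar> = \<bar>u n + h\<bar> * Delta x n"
      using Delta_bounds[of x n] by (simp add: abs_mult)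
    also have "\<dots> \<le> (C + h) * 1"
      using assms(1)[of n] assms(2) Delta_bounds[of x n] by (intro mult_mono) auto
    finally show "\<bar>(u n + h) * Delta x n\<bar> \<le> C + h" by simp
  qed
  also have "\<dots> = real N * (C + h)" by simp
  finally show ?thesis .
qed

lemma bmf_FFcv:
  assumes l0: "0 \<le> lam" and l1: "lam \<le> 1" and h: "0 \<le> h" and C: "0 \<le> C"
  shows "bmf (\<lambda>w. FF N lam h A (cv C w))"
proof -
  define S where "S = {x\<in>walk_paths N. A x}"
  define B where "B = 2 * (real N * (C + h))"
  define a where "a = exp (- B) / 2 ^ N"
  define b where "b = real (card S) * exp B / 2 ^ N"
  have fin: "finite S" unfolding S_def by (rule finite_paths)
  have "\<bar>FF N lam h A (cv C w)\<bar> \<le> (\<bar>ln a\<bar> + \<bar>ln b\<bar>) / real N" for w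
  proof (cases "S = {}")
    case True
    then show ?thesis by (simp add: FF_def Zpart_En S_def[symmetric])
  next
    case False
    then obtain x0 where x0: "x0 \<in> S" by auto
    have ub: "\<bar>cv C w n\<bar> \<le> C" for n unfolding cv_def by (rule clip_bound[OF C])
    have eb: "\<bar>-2 * lam * En N h (cv C w) x\<bar> \<le> B" for x
    proof -
      have "\<bar>-2 * lam * En N h (cv C w) x\<bar> = 2 * lam * \<bar>En N h (cv C w) x\<bar>"
        using l0 by (simp add: abs_mult)
      also have "\<dots> \<le> 2 * 1 * (real N * (C + h))"
        using En_bound[OF ub h, where N=N and x=x] l0 l1 by (intro mult_mono) auto
      finally show ?thesis by (simp add: B_def)
    qed
    have e1: "exp (- B) \<le> exp (-2 * lam * En N h (cv C w) x)" for x
      using eb[of x] by simp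
    have e2: "exp (-2 * lam * En N h (cv C w) x) \<le> exp B" for x
      using eb[of x] by simp
    define Z where "Z = Zpart N lam h (cv C w) A"
    have Z: "Z = (\<Sum>x\<in>S. exp (-2 * lam * En N h (cv C w) x)) / 2 ^ N"
      unfolding Z_def Zpart_En S_def ..
    have "exp (- B) \<le> (\<Sum>x\<in>S. exp (-2 * lam * En N h (cv C w) x))"
    proof -
      have "exp (-2 * lam * En N h (cv C w) x0) \<le> (\<Sum>x\<in>S. exp (-2 * lam * En N h (cv C w) x))"
        by (rule member_le_sum[OF x0]) (use fin in auto)
      then show ?thesis using e1[of x0] by linarith
    qed
    then have za: "a \<le> Z" unfolding Z a_def by (simp add: divide_right_mono)
    have "(\<Sum>x\<in>S. exp (-2 * lam * En N h (cv C w) x)) \<le> (\<Sum>x\<in>S. exp B)"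
      by (rule sum_mono) (rule e2)
    then have zb: "Z \<le> b" unfolding Z b_def by (simp add: divide_right_mono)
    have "\<bar>ln Z\<bar> \<le> \<bar>ln a\<bar> + \<bar>ln b\<bar>"
      by (rule ln_bound[OF _ za zb]) (simp add: a_def)
    then show ?thesis unfolding FF_def Z_def[symmetric] by (simp add: divide_right_mono)
  qed
  then show ?thesis unfolding bmf_def using FFcv_meas by blast
qed

lemma FF_local:
  assumes "\<And>n. n \<in> {1..N} \<Longrightarrow> w n = w' n"
  shows "FF N lam h A w = FF N lam h A w'"
proof -
  have "En N h w x = En N h w' x" for x
    unfolding En_def by (rule sum.cong) (auto simp: assms)
  then show ?thesis unfolding FF_def Zpart_En by simp
qed




definition pr :: "nat \<Rightarrow> real \<Rightarrow> real \<Rightarrow> ((nat \<Rightarrow> int) \<Rightarrow> bool) \<Rightarrow> (nat \<Rightarrow> real) \<Rightarrow> nat \<Rightarrow> real" where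
  "pr N lam h A u i = (\<Sum>x\<in>{x\<in>walk_paths N. A x}. exp (-2 * lam * En N h u x) * Delta x i)
      / (\<Sum>x\<in>{x\<in>walk_paths N. A x}. exp (-2 * lam * En N h u x))"

lemma pr_sum:
  assumes W0: "0 \<le> W0" and cal: "\<And>x. x \<in> walk_paths N \<Longrightarrow> A x \<Longrightarrow> calN x N \<le> W0"
  shows "(\<Sum>i\<in>{1..N}. pr N lam h A u i) \<le> W0"
proof -
  define S where "S = {x\<in>walk_paths N. A x}"
  define e where "e x = exp (-2 * lam * En N h u x)" for x
  define T where "T = (\<Sum>x\<in>S. e x)"
  have eq1: "(\<Sum>i\<in>{1..N}. pr N lam h A u i) = (\<Sum>i\<in>{1..N}. \<Sum>x\<in>S. e x * Delta x i) / T"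
    unfolding pr_def S_def[symmetric] e_def[symmetric] T_def by (simp add: sum_divide_distrib)
  have eq2: "(\<Sum>i\<in>{1..N}. \<Sum>x\<in>S. e x * Delta x i) = (\<Sum>x\<in>S. e x * calN x N)"
    unfolding calN_def sum_distrib_left by (rule sum.swap)
  have "(\<Sum>x\<in>S. e x * calN x N) \<le> (\<Sum>x\<in>S. e x * W0)"
    by (intro sum_mono mult_left_mono) (auto simp: e_def S_def cal)
  also have "(\<Sum>x\<in>S. e x * W0) = T * W0" unfolding T_def by (simp add: sum_distrib_right)
  finally have le: "(\<Sum>x\<in>S. e x * calN x N) \<le> T * W0" .
  have T0: "0 \<le> T" unfolding T_def e_def by (auto intro: sum_nonneg)
  show ?thesis
  proof (cases "T = 0")
    case True then show ?thesis using eq1 W0 by simp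
  next
    case False
    then have "T > 0" using T0 by simp
    then have "(\<Sum>x\<in>S. e x * calN x N) / T \<le> T * W0 / T" using le by (intro divide_right_mono) auto
    then show ?thesis using eq1 eq2 \<open>T > 0\<close> by simp
  qed
qed

locale TL2 = TL +
  fixes C :: real
  assumes C0: "0 \<le> C" and AE1: "AE s in \<mu>1. \<bar>s\<bar> \<le> C" and AE2: "AE s in \<mu>2. \<bar>s\<bar> \<le> C"
    and mean1: "(\<integral>s. s \<partial>\<mu>1) = 0" and mean2: "(\<integral>s. s \<partial>\<mu>2) = 0"
    and sq1: "(\<integral>s. s\<^sup>2 \<partial>\<mu>1) = 1" and sq2: "(\<integral>s. s\<^sup>2 \<partial>\<mu>2) = 1"
begin

lemma Dj_bound:
  assumes i: "i \<in> {1..N}" and l0: "0 \<le> lam" and l1: "lam \<le> 1"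
  shows "\<bar>Dj \<mu>1 \<mu>2 i (\<lambda>w. FF N lam h A (cv C w)) w\<bar>
     \<le> 2 * (4 / 3 * C^3 * exp (4 * C) * lam^3 * pr N lam h A (cv C w) i) / real N"
proof -
  define u where "u = cv C w"
  define S where "S = {x\<in>walk_paths N. A x}"
  define e where "e x = exp (-2 * lam * En N h u x)" for x
  define P where "P = (\<Sum>x\<in>S. e x * (1 - Delta x i)) / 2 ^ N"
  define Q where "Q = (\<Sum>x\<in>S. e x * Delta x i) / 2 ^ N"
  define L where "L v = ln (P + Q * exp (-2 * lam * (v - u i)))" for v
  have P0: "0 \<le> P" unfolding P_def e_def using Delta_bounds by (auto intro!: sum_nonneg divide_nonneg_nonneg)
  have Q0: "0 \<le> Q" unfolding Q_def e_def using Delta_bounds by (auto intro!: sum_nonneg divide_nonneg_nonneg)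
  have ui: "\<bar>u i\<bar> \<le> C" unfolding u_def cv_def by (rule clip_bound[OF C0])
  have key: "FF N lam h A (cv C (w(i := s))) = L (clip C s) / real N" for s
  proof -
    have "cv C (w(i := s)) = u(i := clip C s)" unfolding u_def cv_def by auto
    then show ?thesis
      unfolding FF_def L_def P_def Q_def e_def S_def using Z_site[OF i, of lam h u "clip C s" A] by simp
  qed
  have Ijeq: "Ij M i (\<lambda>w. FF N lam h A (cv C w)) w = (\<integral>s. L (clip C s) \<partial>M) / real N" for M
    unfolding Ij_def key by simp
  obtain \<alpha> \<beta> \<gamma> where ab: "\<And>s. \<bar>s\<bar> \<le> C \<Longrightarrow> \<bar>L s - \<alpha> - \<beta> * s - \<gamma> * s\<^sup>2\<bar> \<le> 4 / 3 * C^3 * exp (4 * C) * lam^3 * (Q / (P + Q))"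
    using site_quad[OF P0 Q0 l0 l1 C0 ui] unfolding L_def by blast
  have Lm: "L \<in> borel_measurable borel" unfolding L_def by measurable
  note q1 = quad_int1[OF M1.prob_space_axioms sets1 C0 AE1 mean1 sq1 Lm ab]
  note q2 = quad_int1[OF M2.prob_space_axioms sets2 C0 AE2 mean2 sq2 Lm ab]
  have "\<bar>Dj \<mu>1 \<mu>2 i (\<lambda>w. FF N lam h A (cv C w)) w\<bar> = \<bar>(\<integral>s. L (clip C s) \<partial>\<mu>1) - (\<integral>s. L (clip C s) \<partial>\<mu>2)\<bar> / real N"
    unfolding Dj_def Ijeq by (simp only: diff_divide_distrib[symmetric] abs_divide abs_of_nat)
  also have "\<dots> \<le> 2 * (4 / 3 * C^3 * exp (4 * C) * lam^3 * (Q / (P + Q))) / real N"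
    using q1 q2 by (intro divide_right_mono) auto
  also have "Q / (P + Q) = pr N lam h A (cv C w) i"
  proof -
    have "P + Q = (\<Sum>x\<in>S. e x) / 2 ^ N"
      unfolding P_def Q_def by (simp add: add_divide_distrib[symmetric] sum.distrib[symmetric] algebra_simps)
    then show ?thesis unfolding pr_def Q_def u_def[symmetric] e_def[symmetric] S_def[symmetric] by simp
  qed
  finally show ?thesis .
qed

end




lemma int_chain:
  assumes pM: "prob_space M" and sM: "sets M = sets borel" and C0: "0 \<le> C"
    and AEb: "AE s in M. \<bar>s\<bar> \<le> C" and l0: "0 \<le> lam" and l1: "lam \<le> 1" and h0: "0 \<le> h"
  shows "(\<integral>w. FF N lam h A w \<partial>iid_law M) = Itr M [1..<N+1] (\<lambda>w. FF N lam h A (cv C w))"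
proof -
  interpret PP: product_prob_space "\<lambda>_::nat. M" UNIV
    using pM by (simp add: product_prob_space_def product_prob_space_axioms_def product_sigma_finite_def prob_space_imp_sigma_finite)
  define G where "G w = FF N lam h A (cv C w)" for w
  have setsI: "sets (PiM I (\<lambda>_::nat. M)) = sets (PiM I (\<lambda>_::nat. borel))" for I
    by (rule sets_PiM_cong) (auto simp: sM)
  have FFm: "FF N lam h A \<in> borel_measurable (iid_law M)"
  proof -
    have "FF N lam h A \<in> borel_measurable (PiM UNIV (\<lambda>_::nat. borel))" using FF_meas by (simp add: PS_def)
    then show ?thesis unfolding iid_law_def using measurable_cong_sets[OF setsI[of UNIV] refl] by blast
  qed
  have Gm: "G \<in> borel_measurable (iid_law M)"
  proof -
    have "G \<in> borel_measurable (PiM UNIV (\<lambda>_::nat. borel))" using FFcv_meas unfolding G_def by (simp add: PS_def)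
    then show ?thesis unfolding iid_law_def using measurable_cong_sets[OF setsI[of UNIV] refl] by blast
  qed
  have AEall: "AE w in iid_law M. \<forall>n\<in>{1..N}. \<bar>w n\<bar> \<le> C"
    unfolding iid_law_def
    by (rule AE_finite_allI) (auto intro!: AE_PiM_component pM AEb)
  have step1: "(\<integral>w. FF N lam h A w \<partial>iid_law M) = (\<integral>w. G w \<partial>iid_law M)"
  proof (rule integral_cong_AE[OF FFm Gm])
    show "AE w in iid_law M. FF N lam h A w = G w"
      using AEall
    proof eventually_elim
      case (elim w)
      show ?case unfolding G_def
        by (rule FF_local) (use elim in \<open>auto simp: cv_def clip_id\<close>)
    qed
  qed
  have GmJ: "G \<in> borel_measurable (PiM {1..N} (\<lambda>_. M))"
    unfolding G_def by (rule measurable_compose[OF incl_meas[OF sM] FFcv_meas])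
  have "(\<integral>w. G w \<partial>PiM {1..N} (\<lambda>_. M)) = (\<integral>w. G w \<partial>distr (PiM UNIV (\<lambda>_. M)) (PiM {1..N} (\<lambda>_. M)) (\<lambda>x. restrict x {1..N}))"
    by (subst PP.distr_PiM_restrict_finite) auto
  also have "\<dots> = (\<integral>w. G (restrict w {1..N}) \<partial>PiM UNIV (\<lambda>_. M))"
    by (rule integral_distr[OF measurable_restrict_subset GmJ]) simp
  also have "\<dots> = (\<integral>w. G w \<partial>PiM UNIV (\<lambda>_. M))"
  proof (rule Bochner_Integration.integral_cong[OF refl])
    fix w :: "nat \<Rightarrow> real"
    show "G (restrict w {1..N}) = G w" unfolding G_def by (rule FF_local) (auto simp: cv_def)
  qed
  finally have step2: "(\<integral>w. G w \<partial>iid_law M) = (\<integral>w. G w \<partial>PiM {1..N} (\<lambda>_. M))"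
    unfolding iid_law_def by simp
  have bG: "bmf G" unfolding G_def by (rule bmf_FFcv[OF l0 l1 h0 C0])
  have step3: "Itr M [1..<N+1] G = (\<integral>w. G w \<partial>PiM {1..N} (\<lambda>_. M))"
  proof -
    have st: "set [1..<N+1] = {1..N}" by auto
    have "distinct [1..<N+1]" by (rule distinct_upt)
    from Itr_PiM[OF pM sM this bG] show ?thesis unfolding st .
  qed
  have Geq: "G = (\<lambda>w. FF N lam h A (cv C w))" by (rule ext) (simp add: G_def)
  show ?thesis using step1 step2 step3 unfolding Geq by linarith
qed




context TL2
begin

lemma main_bound:
  assumes N0: "0 < N" and l0: "0 \<le> lam" and l1: "lam \<le> 1" and h0: "0 \<le> h" and W0: "0 \<le> W0"
    and cal: "\<And>x. x \<in> walk_paths N \<Longrightarrow> A x \<Longrightarrow> calN x N \<le> W0"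
  shows "\<bar>(\<integral>w. FF N lam h A w \<partial>iid_law \<mu>1) - (\<integral>w. FF N lam h A w \<partial>iid_law \<mu>2)\<bar>
     \<le> 8 / 3 * C^3 * exp (4 * C) * lam^3 * W0 / real N"
proof -
  define F where "F w = FF N lam h A (cv C w)" for w
  define js where "js = [1..<N+1]"
  define K where "K = 4 / 3 * C^3 * exp (4 * C) * lam^3"
  have K0: "0 \<le> K" unfolding K_def using C0 l0 by simp
  have st: "set js = {1..N}" unfolding js_def by auto
  have dj: "distinct js" unfolding js_def by simp
  have bF: "bmf F" unfolding F_def by (rule bmf_FFcv[OF l0 l1 h0 C0])
  have e1: "(\<integral>w. FF N lam h A w \<partial>iid_law \<mu>1) = Phi \<mu>1 \<mu>2 js 1 F"
    unfolding Phi_1 F_def js_def by (rule int_chain[OF M1.prob_space_axioms sets1 C0 AE1 l0 l1 h0])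
  have e2: "(\<integral>w. FF N lam h A w \<partial>iid_law \<mu>2) = Phi \<mu>1 \<mu>2 js 0 F"
    unfolding Phi_0 F_def js_def by (rule int_chain[OF M2.prob_space_axioms sets2 C0 AE2 l0 l1 h0])
  have W: "(\<Sum>i\<in>set js. \<bar>Dj \<mu>1 \<mu>2 i F w\<bar>) \<le> 2 * K * W0 / real N" for w
  proof -
    have "(\<Sum>i\<in>set js. \<bar>Dj \<mu>1 \<mu>2 i F w\<bar>) \<le> (\<Sum>i\<in>{1..N}. 2 * (K * pr N lam h A (cv C w) i) / real N)"
      unfolding st F_def K_def by (rule sum_mono) (rule Dj_bound[OF _ l0 l1], simp)
    also have "\<dots> = (\<Sum>i\<in>{1..N}. 2 * K / real N * pr N lam h A (cv C w) i)"
      by (rule sum.cong) auto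
    also have "\<dots> = 2 * K / real N * (\<Sum>i\<in>{1..N}. pr N lam h A (cv C w) i)"
      by (rule sum_distrib_left[symmetric])
    also have "\<dots> \<le> 2 * K / real N * W0"
      by (rule mult_left_mono[OF pr_sum[OF W0 cal]]) (use K0 in auto)
    finally show ?thesis by simp
  qed
  have "\<bar>Phi \<mu>1 \<mu>2 js 1 F - Phi \<mu>1 \<mu>2 js 0 F\<bar> \<le> 2 * K * W0 / real N"
    by (rule Phi_compare[OF dj bF W])
  then show ?thesis unfolding e1 e2 K_def by simp
qed

end

lemma good_mean:
  assumes g: "good_law \<mu>"
  shows "(\<integral>s. s \<partial>\<mu>) = 0"
proof -
  have s: "sets \<mu> = sets borel" and d: "distr \<mu> borel uminus = \<mu>" using g unfolding good_law_def by auto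
  have "(uminus :: real \<Rightarrow> real) \<in> borel_measurable borel" by measurable
  then have um: "uminus \<in> measurable \<mu> borel"
    using measurable_cong_sets[OF s refl] by blast
  have "(\<integral>s. s \<partial>\<mu>) = (\<integral>s. s \<partial>distr \<mu> borel uminus)" using d by simp
  also have "\<dots> = (\<integral>s. - s \<partial>\<mu>)" by (rule integral_distr[OF um]) simp
  also have "\<dots> = - (\<integral>s. s \<partial>\<mu>)" by (rule integral_minus)
  finally show ?thesis by simp
qed

theorem lemma3p1:
  fixes \<mu>1 \<mu>2 :: "real measure"
  assumes "good_law \<mu>1" and "good_law \<mu>2"
  shows "\<exists>c>0. \<forall>h lam N m a. h \<ge> 0 \<longrightarrow> 0 \<le> lam \<longrightarrow> lam \<le> 1 \<longrightarrow>
            even N \<longrightarrow> 0 < N \<longrightarrow> even m \<longrightarrow> m \<le> N \<longrightarrow>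
     \<bar>(\<integral>\<omega>. free_energy_m a N \<omega> lam h m \<partial>iid_law \<mu>1)
       - (\<integral>\<omega>. free_energy_m a N \<omega> lam h m \<partial>iid_law \<mu>2)\<bar>
        \<le> c * real m * lam ^ 3 / real N
   \<and> \<bar>(\<integral>\<omega>. free_energy a N \<omega> lam h \<partial>iid_law \<mu>1)
       - (\<integral>\<omega>. free_energy a N \<omega> lam h \<partial>iid_law \<mu>2)\<bar>
        \<le> c * lam ^ 3"
proof -
  from assms(1) obtain C1 where p1: "prob_space \<mu>1" and s1: "sets \<mu>1 = sets borel"
    and a1: "AE x in \<mu>1. \<bar>x\<bar> \<le> C1" and q1: "(\<integral>x. x\<^sup>2 \<partial>\<mu>1) = 1"
    unfolding good_law_def by auto
  from assms(2) obtain C2 where p2: "prob_space \<mu>2" and s2: "sets \<mu>2 = sets borel"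
    and a2: "AE x in \<mu>2. \<bar>x\<bar> \<le> C2" and q2: "(\<integral>x. x\<^sup>2 \<partial>\<mu>2) = 1"
    unfolding good_law_def by auto
  define C where "C = max (max C1 C2) 0"
  have C0: "0 \<le> C" by (simp add: C_def)
  have a1': "AE x in \<mu>1. \<bar>x\<bar> \<le> C" using a1 by eventually_elim (simp add: C_def le_max_iff_disj)
  have a2': "AE x in \<mu>2. \<bar>x\<bar> \<le> C" using a2 by eventually_elim (simp add: C_def le_max_iff_disj)
  interpret T: TL2 \<mu>1 \<mu>2 C
    unfolding TL2_def TL_def TL_axioms_def TL2_axioms_def
    using p1 p2 s1 s2 a1' a2' q1 q2 good_mean[OF assms(1)] good_mean[OF assms(2)] C0 by blast
  define K where "K = 8 / 3 * C^3 * exp (4 * C)"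
  have K0: "0 \<le> K" unfolding K_def C_def by simp
  show ?thesis
  proof (intro exI[of _ "K + 1"] conjI allI impI)
    show "0 < K + 1" using K0 by simp
  next
    fix h lam :: real and N m :: nat and a :: bc
    assume h0: "0 \<le> h" and l0: "0 \<le> lam" and l1: "lam \<le> 1" and N0: "0 < N" and mN: "m \<le> N"
    have l3: "0 \<le> lam ^ 3" using l0 by simp
    define Am where "Am = (\<lambda>x. Omega a N x \<and> calN x N = real m)"
    have fm: "(\<lambda>w. free_energy_m a N w lam h m) = FF N lam h Am"
      by (rule ext) (simp add: free_energy_m_def FF_def Am_def)
    have "\<bar>(\<integral>w. FF N lam h Am w \<partial>iid_law \<mu>1) - (\<integral>w. FF N lam h Am w \<partial>iid_law \<mu>2)\<bar> \<le> K * lam^3 * real m / real N"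
      using T.main_bound[OF N0 l0 l1 h0, of "real m" Am] by (simp add: Am_def K_def)
    also have "\<dots> \<le> (K + 1) * real m * lam ^ 3 / real N"
    proof (rule divide_right_mono)
      have "0 \<le> real m * lam ^ 3" using l3 by simp
      then show "K * lam ^ 3 * real m \<le> (K + 1) * real m * lam ^ 3" by (simp add: algebra_simps)
    qed simp
    finally show "\<bar>(\<integral>\<omega>. free_energy_m a N \<omega> lam h m \<partial>iid_law \<mu>1)
       - (\<integral>\<omega>. free_energy_m a N \<omega> lam h m \<partial>iid_law \<mu>2)\<bar> \<le> (K + 1) * real m * lam ^ 3 / real N"
      unfolding fm .
  next
    fix h lam :: real and N m :: nat and a :: bc
    assume h0: "0 \<le> h" and l0: "0 \<le> lam" and l1: "lam \<le> 1" and N0: "0 < N"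
    have l3: "0 \<le> lam ^ 3" using l0 by simp
    have ff: "(\<lambda>w. free_energy a N w lam h) = FF N lam h (Omega a N)"
      by (rule ext) (simp add: free_energy_def FF_def)
    have calb: "calN x N \<le> real N" for x
    proof -
      have "calN x N \<le> (\<Sum>n=1..N. 1)" unfolding calN_def by (rule sum_mono) (rule Delta_bounds)
      then show ?thesis by simp
    qed
    have "\<bar>(\<integral>w. FF N lam h (Omega a N) w \<partial>iid_law \<mu>1) - (\<integral>w. FF N lam h (Omega a N) w \<partial>iid_law \<mu>2)\<bar> \<le> K * lam^3 * real N / real N"
      using T.main_bound[OF N0 l0 l1 h0, of "real N" "Omega a N"] calb by (simp add: K_def)
    also have "\<dots> = K * lam^3" using N0 by simp
    also have "\<dots> \<le> (K + 1) * lam ^ 3" using l3 by (simp add: algebra_simps)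
    finally show "\<bar>(\<integral>\<omega>. free_energy a N \<omega> lam h \<partial>iid_law \<mu>1)
       - (\<integral>\<omega>. free_energy a N \<omega> lam h \<partial>iid_law \<mu>2)\<bar> \<le> (K + 1) * lam ^ 3"
      unfolding ff .
  qed
qed



end
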